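(* Let $M=A+\Delta-\sigma vv^{\mathsf T}$ be a generalized modularity matrix and let $S_1,\dots,S_k$ ($k\ge1$) be pairwise disjoint subsets of $V$ such that, for every $i=1,\dots,k$, $$e_{\mathrm{in}}(S_i)+\mathbb{1}_{S_i}^{\mathsf T}\Delta\mathbb{1}_{S_i}\ >\ \sum_{j\ne i}\mathbb{1}_{S_i}^{\mathsf T}A\mathbb{1}_{S_j}.$$ Then $M$ has at least $k-1$ positive eigenvalues (counted with multiplicity).
   Context: Let $V=\{1,\dots,n\}$ and let $A=(a_{ij})\in\mathbb{R}^{n\times n}$ be the adjacency matrix of an undirected connected weighted graph on $V$, possibly with loops, i.e. $A$ is symmetric, entrywise nonnegative and irreducible. A generalized modularity matrix is any matrix $M=A+\Delta-\sigma vv^{\mathsf T}$ where $\Delta$ is a real diagonal matrix, $v\ne0$ is entrywise nonnegative, and $\sigma>0$. For $S\subseteq V$, $\mathbb{1}_S$ is its characteristic vector and $e_{\mathrm{in}}(S)=\mathbb{1}_S^{\mathsf T}A\mathbb{1}_S=\sum_{i,j\in S}a_{ij}$ is the total internal edge weight (including loops). *)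

theory Defs
  imports "Jordan_Normal_Form.Char_Poly"
begin

text \<open>Vertices are indexed 0..n-1 (V = {1..n} shifted by one).\<close>

definition char_vec :: "nat \<Rightarrow> nat set \<Rightarrow> real vec" where
  "char_vec n S = vec n (\<lambda>i. if i \<in> S then 1 else 0)"

definition bil :: "real mat \<Rightarrow> nat set \<Rightarrow> nat set \<Rightarrow> real" where
  "bil A S T = char_vec (dim_row A) S \<bullet> (A *\<^sub>v char_vec (dim_col A) T)"

definition e_in :: "real mat \<Rightarrow> nat set \<Rightarrow> real" where
  "e_in A S = bil A S S"

definition outer :: "real vec \<Rightarrow> real mat" where
  "outer v = mat (dim_vec v) (dim_vec v) (\<lambda>(i,j). v $ i * v $ j)"

text \<open>Adjacency matrix of an undirected connected weighted graph (loops allowed):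
  symmetric, entrywise nonnegative, irreducible (the graph of positive entries is connected).\<close>
definition irreducible_mat :: "real mat \<Rightarrow> bool" where
  "irreducible_mat A \<longleftrightarrow>
     (\<forall>i<dim_row A. \<forall>j<dim_row A.
        (i, j) \<in> {(a, b). a < dim_row A \<and> b < dim_row A \<and> A $$ (a, b) > 0}\<^sup>*)"

definition weighted_adjacency :: "nat \<Rightarrow> real mat \<Rightarrow> bool" where
  "weighted_adjacency n A \<longleftrightarrow> A \<in> carrier_mat n n \<and> A\<^sup>T = A \<and>
     (\<forall>i<n. \<forall>j<n. A $$ (i, j) \<ge> 0) \<and> irreducible_mat A"

definition num_pos_eigenvalues :: "real mat \<Rightarrow> nat" where
  "num_pos_eigenvalues M =
     (\<Sum>x \<in> {x. x > 0 \<and> poly (char_poly M) x = 0}. order x (char_poly M))"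

end

theory Submission
  imports Defs "Jordan_Normal_Form.Schur_Decomposition"
begin

lemma orth_completion:
  fixes u :: "real vec"
  assumes u: "u \<in> carrier_vec n" and uu: "u \<bullet> u = 1"
  shows "\<exists>W. W \<in> carrier_mat n n \<and> W\<^sup>T * W = 1\<^sub>m n \<and> col W 0 = u"
proof -
  have u0: "u \<noteq> 0\<^sub>v n" using uu u by auto
  interpret cof_vec_space n "TYPE(real)" .
  define b where "b = basis_completion u"
  have bc: "set b \<subseteq> carrier_vec n" and bd: "distinct b" and bi: "\<not> lin_dep (set b)"
    and bl: "length b = n" and bh: "hd b = u"
    using basis_completion[OF u u0] unfolding b_def by auto
  define ws where "ws = gram_schmidt n b"
  have wsc: "set ws \<subseteq> carrier_vec n" and wso: "corthogonal ws" and wsl: "length ws = n"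
    using gram_schmidt_result[OF bc bd bi ws_def] bl by auto
  have n: "n > 0" using u0 u by (cases n) auto
  from bh bl n obtain vs where bv: "b = u # vs" by (cases b) auto
  have wsh: "hd ws = u" unfolding ws_def bv using gram_schmidt_hd[OF u] .
  have ws0: "ws ! 0 = u" using wsh wsl n by (cases ws) auto
  have wso': "\<And>i j. i < n \<Longrightarrow> j < n \<Longrightarrow> (ws!i \<bullet> ws!j = 0) = (i \<noteq> j)"
    using corthogonalD[OF wso] wsl by simp
  have wsc': "\<And>i. i < n \<Longrightarrow> ws!i \<in> carrier_vec n" using wsc wsl by auto
  have wspos: "\<And>i. i < n \<Longrightarrow> ws!i \<bullet> ws!i > 0"
  proof -
    fix i assume i: "i < n"
    have "ws!i \<bullet> ws!i \<ge> 0" using conjugate_square_ge_0_vec[of "ws!i"] by simp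
    moreover have "ws!i \<bullet> ws!i \<noteq> 0" using wso'[OF i i] by simp
    ultimately show "ws!i \<bullet> ws!i > 0" by simp
  qed
  define us where "us = map (\<lambda>w. (1 / sqrt (w \<bullet> w)) \<cdot>\<^sub>v w) ws"
  have usl: "length us = n" unfolding us_def using wsl by simp
  have usi: "\<And>i. i < n \<Longrightarrow> us!i = (1 / sqrt (ws!i \<bullet> ws!i)) \<cdot>\<^sub>v ws!i"
    unfolding us_def using wsl by simp
  have usc: "\<And>i. i < n \<Longrightarrow> us!i \<in> carrier_vec n" using usi wsc' by simp
  have uso: "\<And>i j. i < n \<Longrightarrow> j < n \<Longrightarrow> us!i \<bullet> us!j = (if i = j then 1 else 0)"
  proof -
    fix i j assume i: "i < n" and j: "j < n"
    have "us!i \<bullet> us!j = (1 / sqrt (ws!i \<bullet> ws!i)) * (1 / sqrt (ws!j \<bullet> ws!j)) * (ws!i \<bullet> ws!j)"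
      unfolding usi[OF i] usi[OF j] using wsc'[OF i] wsc'[OF j]
      by (simp add: scalar_prod_smult_distrib smult_scalar_prod_distrib)
    also have "\<dots> = (if i = j then 1 else 0)"
    proof (cases "i = j")
      case True
      have "sqrt (ws!i \<bullet> ws!i) * sqrt (ws!i \<bullet> ws!i) = ws!i \<bullet> ws!i"
        using wspos[OF i] by simp
      thus ?thesis using True wspos[OF i] by (simp add: field_simps)
    next
      case False thus ?thesis using wso'[OF i j] by simp
    qed
    finally show "us!i \<bullet> us!j = (if i = j then 1 else 0)" .
  qed
  define W where "W = mat_of_cols n us"
  have W: "W \<in> carrier_mat n n" unfolding W_def using usl by auto
  have colW: "\<And>i. i < n \<Longrightarrow> col W i = us!i" unfolding W_def using usl usc
    by (simp add: col_mat_of_cols)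
  have "W\<^sup>T * W = 1\<^sub>m n"
  proof (rule eq_matI)
    fix i j assume i: "i < dim_row (1\<^sub>m n)" and j: "j < dim_col (1\<^sub>m n)"
    hence i: "i < n" and j: "j < n" by auto
    have "(W\<^sup>T * W) $$ (i,j) = col W i \<bullet> col W j"
      using W i j by (simp add: index_mult_mat row_transpose)
    also have "\<dots> = 1\<^sub>m n $$ (i,j)" using colW[OF i] colW[OF j] uso[OF i j] i j by simp
    finally show "(W\<^sup>T * W) $$ (i,j) = 1\<^sub>m n $$ (i,j)" .
  qed (use W in auto)
  moreover have "col W 0 = u" using colW[OF n] usi[OF n] ws0 uu by simp
  ultimately show ?thesis using W by blast
qed
lemma real_sym_eigen:
  fixes M :: "real mat"
  assumes M: "M \<in> carrier_mat n n" and sym: "M\<^sup>T = M" and n: "n > 0"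
  shows "\<exists>e u. u \<in> carrier_vec n \<and> u \<bullet> u = 1 \<and> M *\<^sub>v u = e \<cdot>\<^sub>v u"
proof -
  let ?Mc = "map_mat (of_real :: real \<Rightarrow> complex) M"
  have Mc: "?Mc \<in> carrier_mat n n" using M by auto
  obtain as where cp: "char_poly ?Mc = (\<Prod> a \<leftarrow> as. [:- a, 1:])" and len: "length as = n"
    using char_poly_factorized[OF Mc] by blast
  obtain z rest where as: "as = z # rest" using len n by (cases as) auto
  have "poly (char_poly ?Mc) z = 0" unfolding cp as by simp
  hence "eigenvalue ?Mc z" using eigenvalue_root_char_poly[OF Mc] by simp
  then obtain v where v: "v \<in> carrier_vec n" "v \<noteq> 0\<^sub>v n" "?Mc *\<^sub>v v = z \<cdot>\<^sub>v v"
    unfolding eigenvalue_def eigenvector_def using Mc by auto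
  define s where "s = (\<Sum>i<n. cnj (v$i) * (?Mc *\<^sub>v v)$i)"
  define R where "R = (\<Sum>i<n. (norm (v$i))^2)"
  have s1: "s = z * of_real R"
  proof -
    have "s = (\<Sum>i<n. z * (cnj (v$i) * v$i))" unfolding s_def
      using v(1,3) by (intro sum.cong refl) (metis (no_types, lifting) index_smult_vec(1) carrier_vecD lessThan_iff mult.left_commute)
    also have "\<dots> = z * of_real R" unfolding R_def of_real_sum complex_norm_square
      by (simp add: sum_distrib_left mult.commute)
    finally show ?thesis .
  qed
  have s2: "s = (\<Sum>i<n. \<Sum>j<n. cnj (v$i) * of_real (M$$(i,j)) * v$j)"
    unfolding s_def using v(1) M
    by (intro sum.cong refl) (auto simp: scalar_prod_def sum_distrib_left mult.assoc lessThan_atLeast0 intro!: sum.cong)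
  have "cnj s = (\<Sum>i<n. \<Sum>j<n. v$i * of_real (M$$(i,j)) * cnj (v$j))"
    unfolding s2 by (simp add: cnj_sum)
  also have "\<dots> = (\<Sum>j<n. \<Sum>i<n. v$i * of_real (M$$(i,j)) * cnj (v$j))"
    by (rule sum.swap)
  also have "\<dots> = s" unfolding s2
  proof (intro sum.cong refl)
    fix i j assume i: "i \<in> {..<n}" and j: "j \<in> {..<n}"
    have "M $$ (j,i) = M $$ (i,j)" using sym M i j
      by (metis carrier_matD(1,2) index_transpose_mat(1) lessThan_iff)
    thus "v $ j * of_real (M $$ (j, i)) * cnj (v $ i) = cnj (v $ i) * of_real (M $$ (i, j)) * v $ j"
      by simp
  qed
  finally have "Im s = 0" by (metis Reals_cnj_iff complex_is_Real_iff)
  moreover have "R > 0"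
  proof -
    from v(1,2) obtain i where i: "i < n" "v $ i \<noteq> 0" by (metis eq_vecI carrier_vecD index_zero_vec)
    have "(norm (v$i))^2 \<le> R" unfolding R_def using i
      by (intro member_le_sum) auto
    moreover have "(norm (v$i))^2 > 0" using i by simp
    ultimately show ?thesis by linarith
  qed
  ultimately have "Im z = 0" unfolding s1 by simp
  hence z: "z = of_real (Re z)" by (simp add: complex_eq_iff)
  have "poly (char_poly ?Mc) (of_real (Re z)) = 0" using \<open>poly (char_poly ?Mc) z = 0\<close> z by simp
  hence "poly (char_poly M) (Re z) = 0" 
    unfolding of_real_hom.char_poly_hom[OF M] of_real_hom.poly_map_poly by simp
  hence "eigenvalue M (Re z)" using eigenvalue_root_char_poly[OF M] by simp
  then obtain u0 where u0: "u0 \<in> carrier_vec n" "u0 \<noteq> 0\<^sub>v n" "M *\<^sub>v u0 = Re z \<cdot>\<^sub>v u0"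
    unfolding eigenvalue_def eigenvector_def using M by auto
  have pos: "u0 \<bullet> u0 > 0" using conjugate_square_greater_0_vec[OF u0(1)] u0(2) by simp
  define u where "u = (1 / sqrt (u0 \<bullet> u0)) \<cdot>\<^sub>v u0"
  have uc: "u \<in> carrier_vec n" unfolding u_def using u0 by auto
  have "u \<bullet> u = (1 / sqrt (u0 \<bullet> u0)) * (1 / sqrt (u0 \<bullet> u0)) * (u0 \<bullet> u0)"
    unfolding u_def using u0(1)
    by (simp add: scalar_prod_smult_distrib smult_scalar_prod_distrib)
  also have "\<dots> = 1" using pos by (simp add: field_simps)
  finally have uu: "u \<bullet> u = 1" .
  have "M *\<^sub>v u = Re z \<cdot>\<^sub>v u" unfolding u_def using M u0
    by (simp add: mult_mat_vec smult_smult_assoc mult.commute)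
  thus ?thesis using uc uu by blast
qed

lemma spectral:
  fixes M :: "real mat"
  assumes "M \<in> carrier_mat n n" and "M\<^sup>T = M"
  shows "\<exists>Q L. Q \<in> carrier_mat n n \<and> L \<in> carrier_mat n n \<and> diagonal_mat L \<and>
     Q\<^sup>T * Q = 1\<^sub>m n \<and> Q * Q\<^sup>T = 1\<^sub>m n \<and> M = Q * L * Q\<^sup>T"
  using assms
proof (induct n arbitrary: M)
  case 0
  thus ?case by (intro exI[of _ "1\<^sub>m 0"] exI[of _ M]) (auto simp: diagonal_mat_def)
next
  case (Suc m M)
  let ?n = "Suc m"
  have M: "M \<in> carrier_mat ?n ?n" and sym: "M\<^sup>T = M" by fact+
  obtain e u where u: "u \<in> carrier_vec ?n" and uu: "u \<bullet> u = 1" and eu: "M *\<^sub>v u = e \<cdot>\<^sub>v u"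
    using real_sym_eigen[OF M sym] by auto
  obtain W where W: "W \<in> carrier_mat ?n ?n" and WW: "W\<^sup>T * W = 1\<^sub>m ?n" and W0: "col W 0 = u"
    using orth_completion[OF u uu] by auto
  have WW': "W * W\<^sup>T = 1\<^sub>m ?n" using mat_mult_left_right_inverse[OF _ W WW] W by auto
  define A' where "A' = W\<^sup>T * M * W"
  have A': "A' \<in> carrier_mat ?n ?n" unfolding A'_def using W M by auto
  have A'ij: "\<And>i j. i < ?n \<Longrightarrow> j < ?n \<Longrightarrow> A' $$ (i,j) = col W i \<bullet> (M *\<^sub>v col W j)"
  proof -
    fix i j assume i: "i < ?n" and j: "j < ?n"
    have "A' = W\<^sup>T * (M * W)" unfolding A'_def using W M by (simp add: assoc_mult_mat[of _ ?n ?n _ ?n _ ?n])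
    hence "A' $$ (i,j) = row W\<^sup>T i \<bullet> col (M * W) j" using i j W M by (simp add: index_mult_mat)
    also have "\<dots> = col W i \<bullet> (M *\<^sub>v col W j)" using i j W M by (simp add: row_transpose col_mult2 mult_mat_vec_def)
    finally show "A' $$ (i,j) = col W i \<bullet> (M *\<^sub>v col W j)" .
  qed
  have colW: "\<And>i j. i < ?n \<Longrightarrow> j < ?n \<Longrightarrow> col W i \<bullet> col W j = (if i = j then 1 else 0)"
  proof -
    fix i j assume i: "i < ?n" and j: "j < ?n"
    have "(W\<^sup>T * W) $$ (i,j) = col W i \<bullet> col W j"
      using W i j by (simp add: index_mult_mat row_transpose)
    thus "col W i \<bullet> col W j = (if i = j then 1 else 0)" using WW i j by simp
  qed
  have A'sym: "A'\<^sup>T = A'" unfolding A'_def using W M sym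
    by (simp add: transpose_mult[of _ ?n ?n _ ?n] assoc_mult_mat[of _ ?n ?n _ ?n _ ?n])
  have A'i0: "\<And>i. i < ?n \<Longrightarrow> A' $$ (i,0) = (if i = 0 then e else 0)"
  proof -
    fix i assume i: "i < ?n"
    have "A' $$ (i,0) = col W i \<bullet> (e \<cdot>\<^sub>v u)" using A'ij[OF i] W0 eu by simp
    also have "\<dots> = e * (col W i \<bullet> col W 0)" using W0 u W i
      by (simp add: scalar_prod_smult_distrib)
    finally show "A' $$ (i,0) = (if i = 0 then e else 0)" using colW[OF i] by simp
  qed
  have A'0j: "\<And>j. j < ?n \<Longrightarrow> A' $$ (0,j) = (if j = 0 then e else 0)"
  proof -
    fix j assume j: "j < ?n"
    have "A' $$ (0,j) = A'\<^sup>T $$ (j,0)" using A' j by simp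
    thus "A' $$ (0,j) = (if j = 0 then e else 0)" using A'sym A'i0[OF j] by simp
  qed
  define A3 where "A3 = mat m m (\<lambda>(i,j). A' $$ (Suc i, Suc j))"
  have A3: "A3 \<in> carrier_mat m m" unfolding A3_def by simp
  have A3sym: "A3\<^sup>T = A3"
  proof (rule eq_matI)
    fix i j assume "i < dim_row A3" "j < dim_col A3"
    hence i: "i < m" and j: "j < m" using A3 by auto
    have "A' $$ (Suc j, Suc i) = A'\<^sup>T $$ (Suc i, Suc j)" using A' i j by simp
    thus "A3\<^sup>T $$ (i, j) = A3 $$ (i, j)" using i j A'sym unfolding A3_def by simp
  qed (use A3 in auto)
  define E where "E = mat 1 1 (\<lambda>_. e)"
  have E: "E \<in> carrier_mat 1 1" unfolding E_def by simp
  have A'block: "A' = four_block_mat E (0\<^sub>m 1 m) (0\<^sub>m m 1) A3"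
  proof (rule eq_matI)
    fix i j assume "i < dim_row (four_block_mat E (0\<^sub>m 1 m) (0\<^sub>m m 1) A3)"
      "j < dim_col (four_block_mat E (0\<^sub>m 1 m) (0\<^sub>m m 1) A3)"
    hence i: "i < ?n" and j: "j < ?n" using E A3 by auto
    show "A' $$ (i, j) = four_block_mat E (0\<^sub>m 1 m) (0\<^sub>m m 1) A3 $$ (i, j)"
      using i j E A3 A'i0[OF i] A'0j[OF j]
      by (cases i; cases j) (auto simp: E_def A3_def)
  qed (use E A3 A' in auto)
  obtain Q' L' where Q': "Q' \<in> carrier_mat m m" and L': "L' \<in> carrier_mat m m"
    and dL': "diagonal_mat L'" and QQ': "Q'\<^sup>T * Q' = 1\<^sub>m m" and QQ'2: "Q' * Q'\<^sup>T = 1\<^sub>m m"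
    and A3eq: "A3 = Q' * L' * Q'\<^sup>T"
    using Suc(1)[OF A3 A3sym] by blast
  define P where "P = four_block_mat (1\<^sub>m 1) (0\<^sub>m 1 m) (0\<^sub>m m 1) Q'"
  have P: "P \<in> carrier_mat ?n ?n" unfolding P_def using Q' by auto
  have PT: "P\<^sup>T = four_block_mat (1\<^sub>m 1) (0\<^sub>m 1 m) (0\<^sub>m m 1) Q'\<^sup>T"
    unfolding P_def using Q' by (subst transpose_four_block_mat[of _ 1 1 _ m _ m]) auto
  have PT': "P\<^sup>T \<in> carrier_mat ?n ?n" using P by auto
  define L where "L = four_block_mat E (0\<^sub>m 1 m) (0\<^sub>m m 1) L'"
  have L: "L \<in> carrier_mat ?n ?n" unfolding L_def using E L' by auto
  have PTP: "P\<^sup>T * P = 1\<^sub>m ?n" unfolding PT unfolding P_def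
    using Q' QQ' by (simp add: mult_four_block_mat[of _ 1 1 _ m _ m _ _ 1 _ m] four_block_one_mat[of 1 m, simplified])
  have PPT: "P * P\<^sup>T = 1\<^sub>m ?n" unfolding PT unfolding P_def
    using Q' QQ'2 by (simp add: mult_four_block_mat[of _ 1 1 _ m _ m _ _ 1 _ m] four_block_one_mat[of 1 m, simplified])
  have PLPT: "P * L * P\<^sup>T = A'" unfolding PT unfolding P_def L_def A'block A3eq
    using Q' L' E by (simp add: mult_four_block_mat[of _ 1 1 _ m _ m _ _ 1 _ m])
  note ass = assoc_mult_mat[of _ ?n ?n _ ?n _ ?n]
  define Q where "Q = W * P"
  have Q: "Q \<in> carrier_mat ?n ?n" unfolding Q_def using W P by auto
  have QT: "Q\<^sup>T = P\<^sup>T * W\<^sup>T" unfolding Q_def using W P by (simp add: transpose_mult)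
  have "Q\<^sup>T * Q = P\<^sup>T * (W\<^sup>T * W) * P" unfolding Q_def using W P by (simp add: ass transpose_mult[of _ ?n ?n _ ?n])
  hence QTQ: "Q\<^sup>T * Q = 1\<^sub>m ?n" using WW PTP P by simp
  have "Q * Q\<^sup>T = W * (P * P\<^sup>T) * W\<^sup>T" unfolding Q_def using W P by (simp add: ass transpose_mult[of _ ?n ?n _ ?n])
  hence QQT: "Q * Q\<^sup>T = 1\<^sub>m ?n" using WW' PPT W by simp
  have "Q * L * Q\<^sup>T = W * (P * L * P\<^sup>T) * W\<^sup>T" unfolding Q_def using W P L by (simp add: ass transpose_mult[of _ ?n ?n _ ?n])
  also have "\<dots> = W * A' * W\<^sup>T" unfolding PLPT ..
  also have "\<dots> = (W * W\<^sup>T) * M * (W * W\<^sup>T)" unfolding A'_def using W M by (simp add: ass)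
  also have "\<dots> = M" using WW' M by simp
  finally have MQ: "M = Q * L * Q\<^sup>T" ..
  have dL: "diagonal_mat L" unfolding diagonal_mat_def
  proof (intro allI impI)
    fix i j assume i: "i < dim_row L" and j: "j < dim_col L" and ij: "i \<noteq> j"
    show "L $$ (i,j) = 0" using i j ij dL' L' E unfolding L_def diagonal_mat_def
      by (auto simp: E_def)
  qed
  show ?case using Q L dL QTQ QQT MQ by blast
qed

lemma order_lin_prod:
  "Polynomial.order (x::real) (\<Prod>a\<leftarrow>as. [:-a,1:]) = count_list as x"
proof -
  have "Polynomial.order x (\<Prod>a\<leftarrow>as. [:-a,1:]) = sum_list (map (Polynomial.order x) (map (\<lambda>a. [:-a,1:]) as))"
    by (rule order_prod_list) auto
  also have "\<dots> = count_list as x"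
    by (induct as) (auto simp: order_linear')
  finally show ?thesis .
qed

lemma count_list_filter: "count_list (filter P xs) x = (if P x then count_list xs x else 0)"
  by (induct xs) auto

lemma num_pos_lin_prod:
  "(\<Sum>x \<in> {x. x > 0 \<and> poly (\<Prod>a\<leftarrow>as. [:-a,1:]) x = 0}. Polynomial.order x (\<Prod>a\<leftarrow>as. [:-a,1:]))
    = length (filter (\<lambda>x. x > (0::real)) as)"
proof -
  have set: "{x. x > 0 \<and> poly (\<Prod>a\<leftarrow>as. [:-a,1:]) x = 0} = set (filter (\<lambda>x. x > 0) as)"
    by (auto simp: poly_prod_list_zero_iff)
  show ?thesis unfolding set order_lin_prod
  proof -
    have "(\<Sum>x\<in>set (filter (\<lambda>x. x > 0) as). count_list as x) =
      (\<Sum>x\<in>set (filter (\<lambda>x. x > 0) as). count_list (filter (\<lambda>x. x > 0) as) x)"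
      by (intro sum.cong refl) (auto simp: count_list_filter)
    also have "\<dots> = length (filter (\<lambda>x. x > 0) as)"
      by (rule sum_count_set) auto
    finally show "(\<Sum>x\<in>set (filter (\<lambda>x. x > 0) as). count_list as x) = length (filter (\<lambda>x. x > 0) as)" .
  qed
qed

lemma num_pos_diag:
  fixes M Q L :: "real mat"
  assumes M: "M \<in> carrier_mat n n" and Q: "Q \<in> carrier_mat n n" and L: "L \<in> carrier_mat n n"
    and dL: "diagonal_mat L" and QTQ: "Q\<^sup>T * Q = 1\<^sub>m n" and QQT: "Q * Q\<^sup>T = 1\<^sub>m n"
    and MQ: "M = Q * L * Q\<^sup>T"
  shows "num_pos_eigenvalues M = length (filter (\<lambda>i. L $$ (i,i) > 0) [0..<n])"
proof -
  have "similar_mat_wit M L Q Q\<^sup>T" unfolding similar_mat_wit_def Let_def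
    using M Q L QTQ QQT MQ by auto
  hence "char_poly M = char_poly L" by (intro char_poly_similar) (auto simp: similar_mat_def)
  also have "\<dots> = (\<Prod>a\<leftarrow>diag_mat L. [:- a, 1:])"
    by (rule char_poly_upper_triangular[OF L]) (use dL L in \<open>auto simp: upper_triangular_def diagonal_mat_def\<close>)
  finally have cp: "char_poly M = (\<Prod>a\<leftarrow>map (\<lambda>i. L $$ (i,i)) [0..<n]. [:- a, 1:])"
    using L by (simp add: diag_mat_def)
  show ?thesis unfolding num_pos_eigenvalues_def cp num_pos_lin_prod
    by (simp add: filter_map o_def)
qed

lemma key:
  fixes M W C :: "real mat"
  assumes M: "M \<in> carrier_mat n n" and sym: "M\<^sup>T = M" and W: "W \<in> carrier_mat n m"
    and C: "C \<in> carrier_mat p m"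
    and pos: "\<And>c. c \<in> carrier_vec m \<Longrightarrow> c \<noteq> 0\<^sub>v m \<Longrightarrow> C *\<^sub>v c = 0\<^sub>v p \<Longrightarrow>
       (W *\<^sub>v c) \<bullet> (M *\<^sub>v (W *\<^sub>v c)) > 0"
  shows "m \<le> num_pos_eigenvalues M + p"
proof (rule ccontr)
  assume contra: "\<not> m \<le> num_pos_eigenvalues M + p"
  obtain Q L where Q: "Q \<in> carrier_mat n n" and L: "L \<in> carrier_mat n n" and dL: "diagonal_mat L"
    and QTQ: "Q\<^sup>T * Q = 1\<^sub>m n" and QQT: "Q * Q\<^sup>T = 1\<^sub>m n" and MQ: "M = Q * L * Q\<^sup>T"
    using spectral[OF M sym] by blast
  define ps where "ps = filter (\<lambda>i. L $$ (i,i) > 0) [0..<n]"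
  have np: "num_pos_eigenvalues M = length ps"
    unfolding ps_def by (rule num_pos_diag[OF M Q L dL QTQ QQT MQ])
  define q where "q = length ps"
  have lt: "p + q < m" using contra np q_def by simp
  define Y where "Y = Q\<^sup>T * W"
  have Y: "Y \<in> carrier_mat n m" unfolding Y_def using Q W by auto
  have psn: "\<And>t. t < q \<Longrightarrow> ps ! t < n" unfolding q_def ps_def
    using nth_mem by fastforce
  define rf where "rf = (\<lambda>i. if i < p then row C i else if i - p < q then row Y (ps ! (i - p)) else 0\<^sub>v m)"
  have rfc: "\<And>i. rf i \<in> carrier_vec m" unfolding rf_def using C Y by auto
  define E where "E = mat\<^sub>r m m (\<lambda>i. if i = m - 1 then 0\<^sub>v m else rf i)"
  have E: "E \<in> carrier_mat m m" unfolding E_def by auto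
  have "det E = 0" unfolding E_def
    by (rule det_row_0) (use lt rfc in auto)
  then obtain c where c: "c \<in> carrier_vec m" "c \<noteq> 0\<^sub>v m" "E *\<^sub>v c = 0\<^sub>v m"
    using det_0_iff_vec_prod_zero_field[OF E] by blast
  have Erow: "\<And>i. i < m - 1 \<Longrightarrow> rf i \<bullet> c = 0"
  proof -
    fix i assume i: "i < m - 1"
    have "(E *\<^sub>v c) $ i = row E i \<bullet> c" using E i by auto
    also have "row E i = rf i" unfolding E_def using i rfc
      by (simp add: row_mat_of_row_fun)
    finally show "rf i \<bullet> c = 0" using c(3) i by simp
  qed
  have Cc: "C *\<^sub>v c = 0\<^sub>v p"
  proof (rule eq_vecI)
    fix i assume "i < dim_vec (0\<^sub>v p)"
    hence i: "i < p" by simp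
    have "(C *\<^sub>v c) $ i = rf i \<bullet> c" unfolding rf_def using i C by simp
    thus "(C *\<^sub>v c) $ i = 0\<^sub>v p $ i" using Erow[of i] i lt by simp
  qed (use C in simp)
  define x where "x = W *\<^sub>v c"
  have x: "x \<in> carrier_vec n" unfolding x_def using W c by simp
  define y where "y = Q\<^sup>T *\<^sub>v x"
  have y: "y \<in> carrier_vec n" unfolding y_def using Q x by simp
  have Yc: "Y *\<^sub>v c = y" unfolding Y_def y_def x_def using Q W c
    by (simp add: assoc_mult_mat_vec[of _ n n _ m])
  have y0: "\<And>i. i < n \<Longrightarrow> L $$ (i,i) > 0 \<Longrightarrow> y $ i = 0"
  proof -
    fix i assume i: "i < n" and Li: "L $$ (i,i) > 0"
    hence "i \<in> set ps" unfolding ps_def by simp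
    then obtain t where t: "t < q" and pt: "ps ! t = i" unfolding q_def by (metis in_set_conv_nth)
    have "rf (p + t) = row Y i" unfolding rf_def using t pt by simp
    hence "row Y i \<bullet> c = 0" using Erow[of "p + t"] t lt by simp
    thus "y $ i = 0" using Yc[symmetric] i Y by simp
  qed
  have "x \<bullet> (M *\<^sub>v x) = x \<bullet> (Q *\<^sub>v (L *\<^sub>v y))" unfolding MQ y_def using Q L x
    by (simp add: assoc_mult_mat_vec[of _ n n _ n])
  also have "\<dots> = y \<bullet> (L *\<^sub>v y)" unfolding y_def
    using transpose_vec_mult_scalar[OF Q, of "L *\<^sub>v (Q\<^sup>T *\<^sub>v x)" x] Q L x by simp
  also have "\<dots> = (\<Sum>i<n. y $ i * (L $$ (i,i) * y $ i))"
  proof -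
    have "\<And>i. i < n \<Longrightarrow> (L *\<^sub>v y) $ i = L $$ (i,i) * y $ i"
    proof -
      fix i assume i: "i < n"
      have "(L *\<^sub>v y) $ i = (\<Sum>j\<in>{0..<n}. L $$ (i,j) * y $ j)"
        using L y i by (simp add: scalar_prod_def)
      also have "\<dots> = (\<Sum>j\<in>{0..<n}. if j = i then L $$ (i,i) * y $ i else 0)"
        by (rule sum.cong) (use i dL L in \<open>auto simp: diagonal_mat_def\<close>)
      also have "\<dots> = L $$ (i,i) * y $ i" using i by simp
      finally show "(L *\<^sub>v y) $ i = L $$ (i,i) * y $ i" .
    qed
    thus ?thesis using y L by (simp add: scalar_prod_def lessThan_atLeast0)
  qed
  also have "\<dots> \<le> 0"
  proof (rule sum_nonpos)
    fix i assume i: "i \<in> {..<n}"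
    show "y $ i * (L $$ (i,i) * y $ i) \<le> 0"
    proof (cases "L $$ (i,i) > 0")
      case True thus ?thesis using y0[of i] i by simp
    next
      case False
      hence "L $$ (i,i) * (y $ i * y $ i) \<le> 0" by (simp add: mult_nonpos_nonneg)
      thus ?thesis by (simp add: algebra_simps)
    qed
  qed
  finally show False using pos[OF c(1,2) Cc] unfolding x_def by simp
qed

lemma dd_pos:
  fixes G :: "nat \<Rightarrow> nat \<Rightarrow> real" and c :: "nat \<Rightarrow> real"
  assumes sym: "\<And>i j. i < k \<Longrightarrow> j < k \<Longrightarrow> G i j = G j i"
    and nn: "\<And>i j. i < k \<Longrightarrow> j < k \<Longrightarrow> i \<noteq> j \<Longrightarrow> G i j \<ge> 0"
    and dom: "\<And>i. i < k \<Longrightarrow> G i i > (\<Sum>j \<in> {..<k} - {i}. G i j)"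
    and c: "i0 < k" "c i0 \<noteq> 0"
  shows "(\<Sum>i<k. \<Sum>j<k. c i * c j * G i j) > 0"
proof -
  define H where "H = (\<lambda>i j. if i = j then 0 else G i j)"
  have Hsym: "\<And>i j. i < k \<Longrightarrow> j < k \<Longrightarrow> H i j = H j i" unfolding H_def using sym by auto
  have Hnn: "\<And>i j. i < k \<Longrightarrow> j < k \<Longrightarrow> H i j \<ge> 0" unfolding H_def using nn by auto
  have off: "\<And>i. i < k \<Longrightarrow> (\<Sum>j \<in> {..<k} - {i}. G i j) = (\<Sum>j<k. H i j)"
  proof -
    fix i assume i: "i < k"
    have "(\<Sum>j<k. H i j) = (\<Sum>j \<in> {..<k} - {i}. H i j) + H i i"
      using i by (simp add: sum.remove[of "{..<k}" i] add.commute)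
    also have "\<dots> = (\<Sum>j \<in> {..<k} - {i}. G i j)" unfolding H_def by simp
    finally show "(\<Sum>j \<in> {..<k} - {i}. G i j) = (\<Sum>j<k. H i j)" by simp
  qed
  have split: "(\<Sum>i<k. \<Sum>j<k. c i * c j * G i j) =
      (\<Sum>i<k. c i * c i * G i i) + (\<Sum>i<k. \<Sum>j<k. c i * c j * H i j)"
  proof -
    have "\<And>i. i < k \<Longrightarrow> (\<Sum>j<k. c i * c j * G i j) = c i * c i * G i i + (\<Sum>j<k. c i * c j * H i j)"
    proof -
      fix i assume i: "i < k"
      have "(\<Sum>j<k. c i * c j * G i j) = (\<Sum>j<k. (if j = i then c i * c i * G i i else 0) + c i * c j * H i j)"
        unfolding H_def by (intro sum.cong) auto
      also have "\<dots> = c i * c i * G i i + (\<Sum>j<k. c i * c j * H i j)"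
        using i by (simp add: sum.distrib)
      finally show "(\<Sum>j<k. c i * c j * G i j) = c i * c i * G i i + (\<Sum>j<k. c i * c j * H i j)" .
    qed
    thus ?thesis by (simp add: sum.distrib)
  qed
  have lb: "(\<Sum>i<k. \<Sum>j<k. c i * c j * H i j) \<ge>
      (\<Sum>i<k. \<Sum>j<k. - ((c i * c i + c j * c j) / 2 * H i j))"
  proof (intro sum_mono)
    fix i j assume i: "i \<in> {..<k}" and j: "j \<in> {..<k}"
    have h: "H i j \<ge> 0" using Hnn i j by simp
    have e1: "0 \<le> (c i + c j) * (c i + c j)" by simp
    have e2: "(c i + c j) * (c i + c j) = c i * c i + c j * c j + 2 * (c i * c j)" by (simp add: algebra_simps)
    have "- ((c i * c i + c j * c j) / 2) \<le> c i * c j" using e1 e2 by (simp add: field_simps)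
    from mult_right_mono[OF this h]
    show "- ((c i * c i + c j * c j) / 2 * H i j) \<le> c i * c j * H i j" by simp
  qed
  have sw: "(\<Sum>i<k. \<Sum>j<k. c j * c j * H i j) = (\<Sum>i<k. \<Sum>j<k. c i * c i * H i j)"
  proof -
    have "(\<Sum>i<k. \<Sum>j<k. c j * c j * H i j) = (\<Sum>j<k. \<Sum>i<k. c j * c j * H i j)" by (rule sum.swap)
    also have "\<dots> = (\<Sum>j<k. \<Sum>i<k. c j * c j * H j i)" by (intro sum.cong refl) (simp add: Hsym)
    finally show ?thesis .
  qed
  have eq2: "(\<Sum>i<k. \<Sum>j<k. - ((c i * c i + c j * c j) / 2 * H i j)) = - (\<Sum>i<k. \<Sum>j<k. c i * c i * H i j)"
  proof -
    have "(\<Sum>i<k. \<Sum>j<k. - ((c i * c i + c j * c j) / 2 * H i j)) =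
       (\<Sum>i<k. \<Sum>j<k. (-(1/2)) * (c i * c i * H i j) + (-(1/2)) * (c j * c j * H i j))"
      by (intro sum.cong refl) (simp add: field_simps)
    also have "\<dots> = (-(1/2)) * (\<Sum>i<k. \<Sum>j<k. c i * c i * H i j) + (-(1/2)) * (\<Sum>i<k. \<Sum>j<k. c j * c j * H i j)"
      by (simp only: sum.distrib sum_distrib_left)
    also have "\<dots> = - (\<Sum>i<k. \<Sum>j<k. c i * c i * H i j)" unfolding sw by simp
    finally show ?thesis .
  qed
  have "(\<Sum>i<k. \<Sum>j<k. c i * c j * G i j) \<ge> (\<Sum>i<k. c i * c i * (G i i - (\<Sum>j<k. H i j)))"
    using split lb eq2 by (simp add: sum_subtractf sum_distrib_left algebra_simps)
  moreover have "(\<Sum>i<k. c i * c i * (G i i - (\<Sum>j<k. H i j))) > 0"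
  proof -
    have t: "\<And>i. i < k \<Longrightarrow> G i i - (\<Sum>j<k. H i j) > 0" using dom off by fastforce
    have nn2: "\<And>i. i < k \<Longrightarrow> 0 \<le> c i * c i * (G i i - (\<Sum>j<k. H i j))"
    proof -
      fix i assume "i < k"
      hence "0 \<le> G i i - (\<Sum>j<k. H i j)" using t less_imp_le by blast
      thus "0 \<le> c i * c i * (G i i - (\<Sum>j<k. H i j))" by (simp add: mult_nonneg_nonneg)
    qed
    have "(\<Sum>i<k. c i * c i * (G i i - (\<Sum>j<k. H i j))) \<ge> c i0 * c i0 * (G i0 i0 - (\<Sum>j<k. H i0 j))"
      by (rule member_le_sum) (use c nn2 in auto)
    moreover have "c i0 * c i0 * (G i0 i0 - (\<Sum>j<k. H i0 j)) > 0" using t[OF c(1)] c(2) by (metis mult_pos_pos not_real_square_gt_zero)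
    ultimately show ?thesis by linarith
  qed
  ultimately show ?thesis by linarith
qed

lemma quad:
  fixes B W :: "real mat"
  assumes B: "B \<in> carrier_mat n n" and W: "W \<in> carrier_mat n k" and c: "c \<in> carrier_vec k"
  shows "(W *\<^sub>v c) \<bullet> (B *\<^sub>v (W *\<^sub>v c)) = (\<Sum>i<k. \<Sum>j<k. c$i * c$j * (col W i \<bullet> (B *\<^sub>v col W j)))"
proof -
  define G where "G = W\<^sup>T * B * W"
  have G: "G \<in> carrier_mat k k" unfolding G_def using W B by auto
  have Gij: "\<And>i j. i < k \<Longrightarrow> j < k \<Longrightarrow> G $$ (i,j) = col W i \<bullet> (B *\<^sub>v col W j)"
  proof -
    fix i j assume i: "i < k" and j: "j < k"
    have "G = W\<^sup>T * (B * W)" unfolding G_def using W B by (simp add: assoc_mult_mat[of _ k n _ n _ k])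
    hence "G $$ (i,j) = row W\<^sup>T i \<bullet> col (B * W) j" using i j W B by (simp add: index_mult_mat)
    also have "\<dots> = col W i \<bullet> (B *\<^sub>v col W j)" using i j W B by (simp add: row_transpose col_mult2 mult_mat_vec_def)
    finally show "G $$ (i,j) = col W i \<bullet> (B *\<^sub>v col W j)" .
  qed
  have "(W *\<^sub>v c) \<bullet> (B *\<^sub>v (W *\<^sub>v c)) = (B *\<^sub>v (W *\<^sub>v c)) \<bullet> (W *\<^sub>v c)"
    using W B c by (intro comm_scalar_prod[of _ n]) auto
  also have "\<dots> = (W\<^sup>T *\<^sub>v (B *\<^sub>v (W *\<^sub>v c))) \<bullet> c"
    using transpose_vec_mult_scalar[OF W c, of "B *\<^sub>v (W *\<^sub>v c)"] W B c by simp
  also have "W\<^sup>T *\<^sub>v (B *\<^sub>v (W *\<^sub>v c)) = G *\<^sub>v c" unfolding G_def using W B c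
    by (simp add: assoc_mult_mat[of _ k n _ n _ k] assoc_mult_mat_vec[of _ k n _ k] assoc_mult_mat_vec[of _ n n _ k])
  also have "(G *\<^sub>v c) \<bullet> c = (\<Sum>i<k. (\<Sum>j<k. G $$ (i,j) * c$j) * c$i)"
    using G c by (simp add: scalar_prod_def lessThan_atLeast0)
  also have "\<dots> = (\<Sum>i<k. \<Sum>j<k. c$i * c$j * (col W i \<bullet> (B *\<^sub>v col W j)))"
    by (intro sum.cong refl) (simp add: Gij sum_distrib_right sum_distrib_left algebra_simps)
  finally show ?thesis .
qed

lemma diag_mult_vec:
  fixes D :: "real mat"
  assumes D: "D \<in> carrier_mat n n" and dD: "diagonal_mat D" and w: "w \<in> carrier_vec n" and l: "l < n"
  shows "(D *\<^sub>v w) $ l = D $$ (l,l) * w $ l"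
proof -
  have "(D *\<^sub>v w) $ l = (\<Sum>j\<in>{0..<n}. D $$ (l,j) * w $ j)"
    using D w l by (simp add: scalar_prod_def)
  also have "\<dots> = (\<Sum>j\<in>{0..<n}. if j = l then D $$ (l,l) * w $ l else 0)"
    by (rule sum.cong) (use l dD D in \<open>auto simp: diagonal_mat_def\<close>)
  also have "\<dots> = D $$ (l,l) * w $ l" using l by simp
  finally show ?thesis .
qed

lemma bil_sym:
  fixes B :: "real mat"
  assumes B: "B \<in> carrier_mat n n" and sym: "B\<^sup>T = B"
  shows "bil B S T = bil B T S"
proof -
  have cv: "\<And>X. char_vec n X \<in> carrier_vec n" unfolding char_vec_def by simp
  have "bil B S T = char_vec n S \<bullet> (B *\<^sub>v char_vec n T)" unfolding bil_def using B by simp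
  also have "\<dots> = (B\<^sup>T *\<^sub>v char_vec n S) \<bullet> char_vec n T"
    using transpose_vec_mult_scalar[OF B cv cv] by simp
  also have "\<dots> = char_vec n T \<bullet> (B *\<^sub>v char_vec n S)" unfolding sym
    using B cv by (intro comm_scalar_prod[of _ n]) auto
  also have "\<dots> = bil B T S" unfolding bil_def using B by simp
  finally show ?thesis .
qed

lemma bil_nonneg:
  fixes B :: "real mat"
  assumes B: "B \<in> carrier_mat n n" and nn: "\<forall>i<n. \<forall>j<n. B $$ (i,j) \<ge> 0"
  shows "bil B S T \<ge> 0"
proof -
  have "bil B S T = (\<Sum>i\<in>{0..<n}. (if i \<in> S then 1 else 0) * (\<Sum>j\<in>{0..<n}. B $$ (i,j) * (if j \<in> T then 1 else 0)))"
    unfolding bil_def char_vec_def using B by (simp add: scalar_prod_def)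
  also have "\<dots> \<ge> 0" using nn by (intro sum_nonneg mult_nonneg_nonneg) auto
  finally show ?thesis .
qed

lemma bil_diag_disj:
  fixes D :: "real mat"
  assumes D: "D \<in> carrier_mat n n" and dD: "diagonal_mat D" and disj: "S \<inter> T = {}"
  shows "bil D S T = 0"
proof -
  have cv: "char_vec n T \<in> carrier_vec n" unfolding char_vec_def by simp
  have "bil D S T = (\<Sum>i\<in>{0..<n}. (if i \<in> S then 1 else 0) * (D *\<^sub>v char_vec n T) $ i)"
    unfolding bil_def using D by (simp add: scalar_prod_def char_vec_def)
  also have "\<dots> = (\<Sum>i\<in>{0..<n}. (if i \<in> S then 1 else 0) * (D $$ (i,i) * (if i \<in> T then 1 else 0)))"
    by (intro sum.cong refl) (use diag_mult_vec[OF D dD cv] in \<open>auto simp: char_vec_def\<close>)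
  also have "\<dots> = 0" using disj by (intro sum.neutral) auto
  finally show ?thesis .
qed

theorem mainTheorem12:
  fixes n k :: nat and A D :: "real mat" and v :: "real vec" and \<sigma> :: real
    and S :: "nat \<Rightarrow> nat set"
  assumes "weighted_adjacency n A"
    and "D \<in> carrier_mat n n" and "diagonal_mat D"
    and "v \<in> carrier_vec n" and "v \<noteq> 0\<^sub>v n" and "\<forall>i<n. v $ i \<ge> 0"
    and "\<sigma> > 0"
    and "k \<ge> 1"
    and "\<forall>i<k. S i \<subseteq> {..<n}"
    and "\<forall>i<k. \<forall>j<k. i \<noteq> j \<longrightarrow> S i \<inter> S j = {}"
    and "\<forall>i<k. e_in A (S i) + bil D (S i) (S i) > (\<Sum>j \<in> {..<k} - {i}. bil A (S i) (S j))"
  shows "num_pos_eigenvalues (A + D - \<sigma> \<cdot>\<^sub>m outer v) \<ge> k - 1"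
proof -
  note wa = assms(1)[unfolded weighted_adjacency_def]
  have A: "A \<in> carrier_mat n n" and Asym: "A\<^sup>T = A" and Ann: "\<forall>i<n. \<forall>j<n. A $$ (i, j) \<ge> 0"
    using wa by auto
  have D: "D \<in> carrier_mat n n" and dD: "diagonal_mat D" and v: "v \<in> carrier_vec n" by fact+
  have disj: "\<And>i j. i < k \<Longrightarrow> j < k \<Longrightarrow> i \<noteq> j \<Longrightarrow> S i \<inter> S j = {}" using assms(10) by blast
  have dom: "\<And>i. i < k \<Longrightarrow> e_in A (S i) + bil D (S i) (S i) > (\<Sum>j \<in> {..<k} - {i}. bil A (S i) (S j))"
    using assms(11) by blast
  have Dsym: "D\<^sup>T = D"
    by (rule eq_matI) (use D dD in \<open>auto simp: diagonal_mat_def, metis\<close>)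
  have Ov: "outer v \<in> carrier_mat n n" unfolding outer_def using v by auto
  define M where "M = A + D - \<sigma> \<cdot>\<^sub>m outer v"
  have M: "M \<in> carrier_mat n n" unfolding M_def using A D Ov by auto
  have Mij: "\<And>i j. i < n \<Longrightarrow> j < n \<Longrightarrow> M $$ (i,j) = A $$ (i,j) + D $$ (i,j) - \<sigma> * (v $ i * v $ j)"
    unfolding M_def outer_def using A D v by auto
  have Msym: "M\<^sup>T = M"
  proof (rule eq_matI)
    fix i j assume "i < dim_row M" "j < dim_col M"
    hence i: "i < n" and j: "j < n" using M by auto
    have "A $$ (j,i) = A $$ (i,j)" using Asym A i j by (metis carrier_matD(1,2) index_transpose_mat(1))
    moreover have "D $$ (j,i) = D $$ (i,j)" using Dsym D i j by (metis carrier_matD(1,2) index_transpose_mat(1))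
    ultimately show "M\<^sup>T $$ (i, j) = M $$ (i, j)" using Mij[OF i j] Mij[OF j i] M i j by simp
  qed (use M in auto)
  define W where "W = mat n k (\<lambda>(l,j). if l \<in> S j then 1 else (0::real))"
  have W: "W \<in> carrier_mat n k" unfolding W_def by simp
  have colW: "\<And>j. j < k \<Longrightarrow> col W j = char_vec n (S j)"
    unfolding W_def char_vec_def by (rule eq_vecI) auto
  define C where "C = mat 1 k (\<lambda>(_,j). v \<bullet> char_vec n (S j))"
  have C: "C \<in> carrier_mat 1 k" unfolding C_def by simp
  have cv: "\<And>X. char_vec n X \<in> carrier_vec n" unfolding char_vec_def by simp
  define G where "G = (\<lambda>i j. bil A (S i) (S j) + bil D (S i) (S j))"
  have Gdef: "\<And>i j. i < k \<Longrightarrow> j < k \<Longrightarrow> col W i \<bullet> (M *\<^sub>v col W j) =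
      G i j - \<sigma> * ((v \<bullet> char_vec n (S i)) * (v \<bullet> char_vec n (S j)))"
  proof -
    fix i j assume i: "i < k" and j: "j < k"
    let ?wi = "char_vec n (S i)" and ?wj = "char_vec n (S j)"
    have ow: "(\<sigma> \<cdot>\<^sub>m outer v) *\<^sub>v ?wj = (\<sigma> * (v \<bullet> ?wj)) \<cdot>\<^sub>v v"
    proof (rule eq_vecI)
      fix l assume "l < dim_vec ((\<sigma> * (v \<bullet> ?wj)) \<cdot>\<^sub>v v)"
      hence l: "l < n" using v by simp
      have "((\<sigma> \<cdot>\<^sub>m outer v) *\<^sub>v ?wj) $ l = (\<Sum>l'\<in>{0..<n}. \<sigma> * (v $ l * v $ l') * ?wj $ l')"
        using l v cv[of "S j"] by (simp add: outer_def scalar_prod_def)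
      also have "\<dots> = \<sigma> * (v \<bullet> ?wj) * v $ l"
        using v cv[of "S j"] by (simp add: scalar_prod_def sum_distrib_left sum_distrib_right algebra_simps)
      finally show "((\<sigma> \<cdot>\<^sub>m outer v) *\<^sub>v ?wj) $ l = ((\<sigma> * (v \<bullet> ?wj)) \<cdot>\<^sub>v v) $ l" using l v by simp
    qed (use v Ov in simp)
    have "M *\<^sub>v ?wj = A *\<^sub>v ?wj + D *\<^sub>v ?wj - (\<sigma> * (v \<bullet> ?wj)) \<cdot>\<^sub>v v"
      unfolding M_def ow[symmetric] using A D Ov cv
      by (simp add: minus_mult_distrib_mat_vec[of _ n n] add_mult_distrib_mat_vec[of _ n n])
    hence "?wi \<bullet> (M *\<^sub>v ?wj) = ?wi \<bullet> (A *\<^sub>v ?wj) + ?wi \<bullet> (D *\<^sub>v ?wj) - \<sigma> * (v \<bullet> ?wj) * (?wi \<bullet> v)"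
      using A D v cv
      by (simp add: scalar_prod_minus_distrib[of _ n] scalar_prod_add_distrib[of _ n] scalar_prod_smult_distrib[of _ n])
    also have "?wi \<bullet> v = v \<bullet> ?wi" using v cv by (intro comm_scalar_prod[of _ n]) auto
    finally show "col W i \<bullet> (M *\<^sub>v col W j) = G i j - \<sigma> * ((v \<bullet> ?wi) * (v \<bullet> ?wj))"
      unfolding colW[OF i] colW[OF j] G_def bil_def using A D by (simp add: algebra_simps)
  qed
  have "k \<le> num_pos_eigenvalues M + 1"
  proof (rule key[OF M Msym W C])
    fix c assume c: "c \<in> carrier_vec k" and c0: "c \<noteq> 0\<^sub>v k" and Cc: "C *\<^sub>v c = 0\<^sub>v 1"
    define a where "a = (\<lambda>i. v \<bullet> char_vec n (S i))"
    have sa: "(\<Sum>i<k. c$i * a i) = 0"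
    proof -
      have "(C *\<^sub>v c) $ 0 = (\<Sum>i<k. a i * c$i)"
        using C c by (simp add: C_def a_def scalar_prod_def lessThan_atLeast0)
      thus ?thesis using Cc by (simp add: mult.commute)
    qed
    have "(W *\<^sub>v c) \<bullet> (M *\<^sub>v (W *\<^sub>v c)) = (\<Sum>i<k. \<Sum>j<k. c$i * c$j * (G i j - \<sigma> * (a i * a j)))"
      unfolding quad[OF M W c] a_def by (intro sum.cong refl) (simp add: Gdef)
    also have "\<dots> = (\<Sum>i<k. \<Sum>j<k. c$i * c$j * G i j) - \<sigma> * ((\<Sum>i<k. c$i * a i) * (\<Sum>j<k. c$j * a j))"
      by (simp add: sum_subtractf right_diff_distrib sum_distrib_left sum_distrib_right algebra_simps)
    also have "\<dots> = (\<Sum>i<k. \<Sum>j<k. c$i * c$j * G i j)" using sa by simp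
    also have "\<dots> > 0"
    proof -
      obtain i0 where i0: "i0 < k" "c $ i0 \<noteq> 0" using c c0 by (metis eq_vecI carrier_vecD index_zero_vec)
      show ?thesis
      proof (rule dd_pos[of k G i0 "\<lambda>i. c $ i"])
        fix i j assume i: "i < k" and j: "j < k"
        show "G i j = G j i" unfolding G_def using bil_sym[OF A Asym] bil_sym[OF D Dsym] by simp
      next
        fix i j assume i: "i < k" and j: "j < k" and ij: "i \<noteq> j"
        show "G i j \<ge> 0" unfolding G_def using bil_nonneg[OF A Ann] bil_diag_disj[OF D dD disj[OF i j ij]] by simp
      next
        fix i assume i: "i < k"
        have "(\<Sum>j \<in> {..<k} - {i}. G i j) = (\<Sum>j \<in> {..<k} - {i}. bil A (S i) (S j))"
          unfolding G_def by (intro sum.cong refl) (use i bil_diag_disj[OF D dD] disj in auto)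
        thus "G i i > (\<Sum>j \<in> {..<k} - {i}. G i j)" using dom[OF i] unfolding G_def e_in_def by simp
      qed (use i0 in auto)
    qed
    finally show "(W *\<^sub>v c) \<bullet> (M *\<^sub>v (W *\<^sub>v c)) > 0" .
  qed
  thus ?thesis unfolding M_def by simp
qed

end
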